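(* Let $\mathbb I\subseteq\mathbb R$ be an interval with non-empty interior, $d\in\mathbb N$, and $\kappa:\mathbb I\to\mathbb R^d$ locally integrable. Consider the linear functional $H:C_c^\infty(\mathbb I,\mathbb R^d)\to\mathbb R$, $H(f)=\int_{\mathbb I}\kappa(t)^Tf(t)\,dt$. Suppose $H$ is continuous with respect to the topology of point-wise convergence on $C_c^\infty(\mathbb I,\mathbb R^d)$. Then $\kappa$ vanishes Lebesgue-almost everywhere and, hence, $H$ is constantly zero.
   Context: $C_c^\infty(\mathbb I,\mathbb R^d)$ is the set of smooth compactly supported functions $\mathbb I\to\mathbb R^d$. The topology of point-wise convergence on it is the subspace topology induced by the product topology on $(\mathbb R^d)^{\mathbb I}$. *)

theory Defs
  imports "HOL-Analysis.Analysis"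
begin

definition smooth_fun :: "(real \<Rightarrow> 'a::real_normed_vector) \<Rightarrow> bool" where
  "smooth_fun f \<longleftrightarrow> (\<exists>D :: nat \<Rightarrow> real \<Rightarrow> 'a. D 0 = f \<and>
      (\<forall>k t. (D k has_vector_derivative D (Suc k) t) (at t)))"

text \<open>They are represented as functions on the whole real line (zero outside I).\<close>
definition test_functions :: "real set \<Rightarrow> (real \<Rightarrow> 'a::euclidean_space) set" where
  "test_functions I = {f. smooth_fun f \<and> compact (closure {t. f t \<noteq> 0})
                            \<and> closure {t. f t \<noteq> 0} \<subseteq> I}"

definition locally_integrable_on :: "(real \<Rightarrow> 'a::euclidean_space) \<Rightarrow> real set \<Rightarrow> bool" where
  "locally_integrable_on \<kappa> I \<longleftrightarrow> (\<forall>K. compact K \<and> K \<subseteq> I \<longrightarrow> set_integrable lebesgue K \<kappa>)"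

end

theory Submission
  imports Defs "HOL-Computational_Algebra.Polynomial"
begin


fun Ck :: "nat \<Rightarrow> (real \<Rightarrow> real) \<Rightarrow> bool" where
  "Ck 0 f = True"
| "Ck (Suc n) f = (\<exists>f'. (\<forall>t. (f has_real_derivative f' t) (at t)) \<and> Ck n f')"

lemma Ck_mono: "Ck (Suc n) f \<Longrightarrow> Ck n f"
proof (induction n arbitrary: f)
  case 0 then show ?case by simp
next
  case (Suc n)
  then obtain f' where "\<forall>t. (f has_real_derivative f' t) (at t)" "Ck (Suc n) f'" by auto
  with Suc.IH show ?case by auto
qed

lemma Ck_const: "Ck n (\<lambda>t. c)"
proof (induction n arbitrary: c)
  case (Suc n) then show ?case by (auto intro!: exI[of _ "\<lambda>t. 0"] derivative_eq_intros)
qed simp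

lemma Ck_add: "Ck n f \<Longrightarrow> Ck n g \<Longrightarrow> Ck n (\<lambda>t. f t + g t)"
proof (induction n arbitrary: f g)
  case (Suc n)
  then obtain f' g' where "\<forall>t. (f has_real_derivative f' t) (at t)" "Ck n f'"
     "\<forall>t. (g has_real_derivative g' t) (at t)" "Ck n g'" by auto
  with Suc.IH show ?case by (auto intro!: exI[of _ "\<lambda>t. f' t + g' t"] derivative_eq_intros)
qed simp

lemma Ck_mult: "Ck n f \<Longrightarrow> Ck n g \<Longrightarrow> Ck n (\<lambda>t. f t * g t)"
proof (induction n arbitrary: f g)
  case (Suc n)
  then obtain f' g' where d: "\<forall>t. (f has_real_derivative f' t) (at t)" "Ck n f'"
     "\<forall>t. (g has_real_derivative g' t) (at t)" "Ck n g'" by auto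
  have "Ck n f" "Ck n g" using Suc.prems Ck_mono by auto
  then have "Ck n (\<lambda>t. f' t * g t + f t * g' t)"
    using Suc.IH d by (intro Ck_add) auto
  moreover have "\<forall>t. ((\<lambda>t. f t * g t) has_real_derivative (f' t * g t + f t * g' t)) (at t)"
    using d by (auto intro!: derivative_eq_intros)
  ultimately show ?case by auto
qed simp

lemma Ck_inverse: "Ck n g \<Longrightarrow> (\<And>t. g t \<noteq> 0) \<Longrightarrow> Ck n (\<lambda>t. 1 / g t)"
proof (induction n arbitrary: g)
  case (Suc n)
  then obtain g' where d: "\<forall>t. (g has_real_derivative g' t) (at t)" "Ck n g'" by auto
  have "Ck n g" using Suc.prems Ck_mono by auto
  then have i: "Ck n (\<lambda>t. 1 / g t)" using Suc by auto
  have "Ck n (\<lambda>t. (-1) * g' t * (1 / g t) * (1 / g t))"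
    by (intro Ck_mult Ck_const i d)
  moreover have "\<forall>t. ((\<lambda>t. 1 / g t) has_real_derivative ((-1) * g' t * (1 / g t) * (1 / g t))) (at t)"
    using d Suc.prems(2) by (auto intro!: derivative_eq_intros simp: power2_eq_square field_simps)
  ultimately show ?case by auto
qed simp

lemma Ck_affine: "Ck n f \<Longrightarrow> Ck n (\<lambda>t. f (a * t + b))"
proof (induction n arbitrary: f)
  case (Suc n)
  then obtain f' where d: "\<forall>t. (f has_real_derivative f' t) (at t)" "Ck n f'" by auto
  have "Ck n (\<lambda>t. a * f' (a * t + b))"
    using Suc.IH d by (intro Ck_mult Ck_const) auto
  moreover have "\<forall>t. ((\<lambda>t. f (a * t + b)) has_real_derivative (a * f' (a * t + b))) (at t)"
  proof
    fix t
    have "((\<lambda>t. a * t + b) has_real_derivative a) (at t)"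
      by (auto intro!: derivative_eq_intros)
    from DERIV_chain2[OF _ this, of f "f' (a*t+b)"] d show "((\<lambda>t. f (a * t + b)) has_real_derivative (a * f' (a * t + b))) (at t)"
      by (simp add: mult.commute)
  qed
  ultimately show ?case by auto
qed simp


lemma poly_exp_tendsto: "((\<lambda>x. poly p x * exp (- x)) \<longlongrightarrow> (0::real)) at_top"
proof -
  have "((\<lambda>x. \<Sum>i\<le>degree p. coeff p i * (x ^ i / exp x)) \<longlongrightarrow> (\<Sum>i\<le>degree p. coeff p i * 0)) at_top"
    by (intro tendsto_sum tendsto_mult tendsto_const tendsto_power_div_exp_0)
  moreover have "(\<Sum>i\<le>degree p. coeff p i * (x ^ i / exp x)) = poly p x * exp (- x)" for x
    by (simp add: poly_altdef exp_minus divide_inverse mult.assoc sum_distrib_right)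
  ultimately show ?thesis by simp
qed

definition psip :: "real poly \<Rightarrow> real \<Rightarrow> real" where
  "psip p t = (if t > 0 then poly p (1 / t) * exp (- (1 / t)) else 0)"

definition nextp :: "real poly \<Rightarrow> real poly" where
  "nextp p = [:0, 0, 1:] * (p - pderiv p)"

lemma psip_deriv: "(psip p has_real_derivative psip (nextp p) t) (at t)"
proof -
  consider "t > 0" | "t < 0" | "t = 0" by linarith
  then show ?thesis
  proof cases
    case 1
    have "((\<lambda>t. poly p (1 / t) * exp (- (1 / t))) has_real_derivative psip (nextp p) t) (at t)"
      using 1 by (auto intro!: derivative_eq_intros simp: psip_def nextp_def algebra_simps power2_eq_square
         divide_simps)
    then show ?thesis
      by (rule has_field_derivative_transform_within_open[of _ _ _ "{0<..}"]) (use 1 in \<open>auto simp: psip_def\<close>)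
  next
    case 2
    have "((\<lambda>t. 0) has_real_derivative psip (nextp p) t) (at t)"
      using 2 by (auto intro!: derivative_eq_intros simp: psip_def)
    then show ?thesis
      by (rule has_field_derivative_transform_within_open[of _ _ _ "{..<0}"]) (use 2 in \<open>auto simp: psip_def\<close>)
  next
    case 3
    have r: "((\<lambda>y. (psip p y - psip p 0) / (y - 0)) \<longlongrightarrow> 0) (at_right 0)"
    proof -
      note filterlim_compose[OF poly_exp_tendsto[of "pCons 0 p"] filterlim_inverse_at_top_right]
      then show ?thesis
        by (rule Lim_transform_eventually)
           (auto simp: eventually_at_right_less eventually_at_filter psip_def field_simps
              intro!: eventually_mono[OF eventually_at_right_less[of 0]])
    qed
    have l: "((\<lambda>y. (psip p y - psip p 0) / (y - 0)) \<longlongrightarrow> 0) (at_left 0)"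
      by (rule tendsto_eventually)
         (auto simp: psip_def eventually_at_filter intro!: always_eventually)
    have "((\<lambda>y. (psip p y - psip p 0) / (y - 0)) \<longlongrightarrow> 0) (at 0)"
      using filterlim_split_at[OF l r] .
    then show ?thesis using 3 by (simp add: has_field_derivative_iff psip_def)
  qed
qed

lemma Ck_psip: "Ck n (psip p)"
proof (induction n arbitrary: p)
  case (Suc n) then show ?case using psip_deriv by auto
qed simp


lemma Ck_Suc_deriv: "Ck (Suc n) f \<Longrightarrow> (\<forall>t. (f has_real_derivative deriv f t) (at t)) \<and> Ck n (deriv f)"
proof -
  assume "Ck (Suc n) f"
  then obtain f' where d: "\<forall>t. (f has_real_derivative f' t) (at t)" "Ck n f'" by auto
  then have "deriv f = f'" by (auto intro!: ext DERIV_imp_deriv)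
  with d show ?thesis by auto
qed

lemma smooth_fun_Ck:
  assumes "\<And>n. Ck n f"
  shows "smooth_fun (\<lambda>t. f t *\<^sub>R v)"
proof -
  have C: "Ck n ((deriv ^^ k) f)" for n k
  proof (induction k arbitrary: n)
    case 0 then show ?case using assms by simp
  next
    case (Suc k) then show ?case using Ck_Suc_deriv[of n "(deriv ^^ k) f"] by simp
  qed
  have "((\<lambda>t. (deriv ^^ k) f t *\<^sub>R v) has_vector_derivative (deriv ^^ Suc k) f t *\<^sub>R v) (at t)" for k t
  proof -
    have "((deriv ^^ k) f has_real_derivative deriv ((deriv ^^ k) f) t) (at t)"
      using Ck_Suc_deriv[OF C[of "Suc 0" k]] by auto
    then show ?thesis
      by (auto intro!: derivative_eq_intros simp: has_real_derivative_iff_has_vector_derivative)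
  qed
  then show ?thesis unfolding smooth_fun_def
    by (intro exI[of _ "\<lambda>k t. (deriv ^^ k) f t *\<^sub>R v"]) auto
qed

definition psi :: "real \<Rightarrow> real" where "psi = psip 1"

lemma psi_nonneg: "psi t \<ge> 0" and psi_pos: "t > 0 \<Longrightarrow> psi t > 0" and psi_zero: "t \<le> 0 \<Longrightarrow> psi t = 0"
  by (auto simp: psi_def psip_def)

definition step :: "real \<Rightarrow> real" where
  "step t = psi t * (1 / (psi t + psi (1 - t)))"

lemma step_den_pos: "psi t + psi (1 - t) > 0"
proof (cases "t > 0")
  case True then show ?thesis using psi_pos[of t] psi_nonneg[of "1-t"] by linarith
next
  case False then show ?thesis using psi_pos[of "1-t"] psi_nonneg[of t] by linarith
qed

lemma Ck_step: "Ck n step"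
proof -
  have "Ck n (\<lambda>t. psi t + psi ((-1) * t + 1))"
    unfolding psi_def by (intro Ck_add Ck_psip Ck_affine)
  then have "Ck n (\<lambda>t. 1 / (psi t + psi ((-1) * t + 1)))"
  proof (rule Ck_inverse)
    show "psi t + psi ((-1) * t + 1) \<noteq> 0" for t using step_den_pos[of t] by simp
  qed
  then show ?thesis unfolding step_def using Ck_psip[of n 1]
    by (metis (no_types, lifting) Ck_mult add.commute mult_minus1 psi_def uminus_add_conv_diff diff_minus_eq_add ext)
qed

lemma step_zero: "t \<le> 0 \<Longrightarrow> step t = 0"
  by (simp add: step_def psi_zero)

lemma step_one: "t \<ge> 1 \<Longrightarrow> step t = 1"
  using step_den_pos[of t] by (simp add: step_def psi_zero)

lemma step_bounds: "0 \<le> step t" "step t \<le> 1"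
  using step_den_pos[of t] psi_nonneg[of t] psi_nonneg[of "1-t"]
  by (auto simp: step_def divide_simps)



definition bump :: "real \<Rightarrow> real \<Rightarrow> nat \<Rightarrow> real \<Rightarrow> real" where
  "bump x y k t = step (real (Suc k) * (t - x)) * step (real (Suc k) * (y - t))"

lemma Ck_bump: "Ck n (bump x y k)"
proof -
  have "Ck n (\<lambda>t. step (real (Suc k) * t + (- real (Suc k) * x)) * step ((- real (Suc k)) * t + real (Suc k) * y))"
    by (intro Ck_mult Ck_affine Ck_step)
  moreover have "(\<lambda>t. step (real (Suc k) * t + (- real (Suc k) * x)) * step ((- real (Suc k)) * t + real (Suc k) * y)) = bump x y k"
    unfolding bump_def by (intro ext arg_cong2[where f="(*)"] arg_cong[where f=step]) (simp_all add: algebra_simps)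
  ultimately show ?thesis by simp
qed

lemma bump_out: "t \<le> x \<or> y \<le> t \<Longrightarrow> bump x y k t = 0"
proof -
  assume "t \<le> x \<or> y \<le> t"
  then have "real (Suc k) * (t - x) \<le> 0 \<or> real (Suc k) * (y - t) \<le> 0"
    by (auto simp: mult_le_0_iff)
  then show ?thesis by (auto simp: bump_def step_zero)
qed

lemma bump_bounds: "0 \<le> bump x y k t" "bump x y k t \<le> 1"
  unfolding bump_def by (simp_all add: step_bounds mult_le_one)

lemma bump_lim: "(\<lambda>k. bump x y k t) \<longlonglongrightarrow> (if t \<in> {x<..<y} then 1 else 0)"
proof (cases "t \<in> {x<..<y}")
  case True
  obtain N :: nat where "max (1 / (t - x)) (1 / (y - t)) \<le> real N"
    using real_arch_simple by blast
  then have N: "real N \<ge> 1 / (t - x)" "real N \<ge> 1 / (y - t)" by auto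
  have "bump x y k t = 1" if "k \<ge> N" for k
  proof -
    have "real (Suc k) \<ge> 1 / (t - x)" "real (Suc k) \<ge> 1 / (y - t)" using N that by auto
    then have "real (Suc k) * (t - x) \<ge> 1" "real (Suc k) * (y - t) \<ge> 1"
      using True by (auto simp: field_simps)
    then show ?thesis by (simp add: bump_def step_one)
  qed
  then have "eventually (\<lambda>k. bump x y k t = 1) sequentially"
    by (rule eventually_sequentiallyI)
  then have "(\<lambda>k. bump x y k t) \<longlonglongrightarrow> 1" by (rule tendsto_eventually)
  then show ?thesis using True by simp
next
  case False
  then show ?thesis by (auto simp: bump_out)
qed

lemma Ck_cont: "Ck (Suc n) f \<Longrightarrow> continuous_on S f"
proof -
  assume "Ck (Suc n) f"
  then obtain f' where d: "\<forall>t. (f has_real_derivative f' t) (at t)" by auto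
  show ?thesis
    by (rule DERIV_continuous_on[of _ _ f']) (use d in \<open>blast intro: has_field_derivative_at_within\<close>)
qed

lemma bump_test:
  assumes "{x..y} \<subseteq> I"
  shows "(\<lambda>t. bump x y k t *\<^sub>R v) \<in> test_functions I"
proof -
  have sm: "smooth_fun (\<lambda>t. bump x y k t *\<^sub>R v)" by (rule smooth_fun_Ck[OF Ck_bump])
  have sub: "{t. bump x y k t *\<^sub>R v \<noteq> 0} \<subseteq> {x..y}"
  proof
    fix t assume t: "t \<in> {t. bump x y k t *\<^sub>R v \<noteq> 0}"
    show "t \<in> {x..y}"
    proof (rule ccontr)
      assume "t \<notin> {x..y}"
      then have "t \<le> x \<or> y \<le> t" by auto
      then have "bump x y k t = 0" by (rule bump_out)
      with t show False by simp
    qed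
  qed
  then have cl: "closure {t. bump x y k t *\<^sub>R v \<noteq> 0} \<subseteq> {x..y}"
    by (simp add: closure_minimal)
  have "compact (closure {t. bump x y k t *\<^sub>R v \<noteq> 0})"
    using cl compact_Int_closed[of "{x..y}" "closure {t. bump x y k t *\<^sub>R v \<noteq> 0}"]
    by (simp add: Int_absorb1)
  then show ?thesis using assms sm cl unfolding test_functions_def by auto
qed


lemma set_integrable_inner:
  assumes "set_integrable lebesgue S \<kappa>"
  shows "set_integrable lebesgue S (\<lambda>t. \<kappa> t \<bullet> i)"
proof -
  have "integrable lebesgue (\<lambda>t. (indicator S t *\<^sub>R \<kappa> t) \<bullet> i)"
    using assms unfolding set_integrable_def by (rule integrable_inner_left)
  then show ?thesis unfolding set_integrable_def by simp
qed

lemma Icc_sets_lebesgue: "{x..y::real} \<in> sets lebesgue"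
  by (metis box_real(2) lmeasurable_cbox fmeasurableD)

lemma interval_zero:
  fixes \<kappa> :: "real \<Rightarrow> 'a::euclidean_space" and H :: "(real \<Rightarrow> 'a) \<Rightarrow> real"
  assumes Hdef: "\<And>f. f \<in> test_functions I \<Longrightarrow> H f = (LINT t:I|lebesgue. \<kappa> t \<bullet> f t)"
    and loc: "locally_integrable_on \<kappa> I"
    and van: "\<And>f::real\<Rightarrow>'a. f \<in> test_functions I \<Longrightarrow> (\<forall>t\<in>F. f t = 0) \<Longrightarrow> H f = 0"
    and sub: "{x..y} \<subseteq> I" and disj: "{x..y} \<inter> F = {}"
  shows "integral {x..y} (\<lambda>t. \<kappa> t \<bullet> i) = 0"
proof -
  have ki: "set_integrable lebesgue {x..y} (\<lambda>t. \<kappa> t \<bullet> i)"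
    using loc sub unfolding locally_integrable_on_def by (intro set_integrable_inner) auto
  have prod: "set_integrable lebesgue {x..y} (\<lambda>t. bump x y k t * (\<kappa> t \<bullet> i))" for k
  proof (rule absolutely_integrable_bounded_measurable_product_real[OF _ _ _ ki])
    show "bump x y k \<in> borel_measurable (lebesgue_on {x..y})"
      by (rule continuous_imp_measurable_on_sets_lebesgue[OF Ck_cont[OF Ck_bump[of "Suc 0"]] Icc_sets_lebesgue])
    show "bounded (bump x y k ` {x..y})"
      unfolding bounded_iff using bump_bounds by (intro exI[of _ 1]) auto
  qed (rule Icc_sets_lebesgue)
  have zero: "integral {x..y} (\<lambda>t. bump x y k t * (\<kappa> t \<bullet> i)) = 0" for k
  proof -
    have test: "(\<lambda>t. bump x y k t *\<^sub>R i) \<in> test_functions I" by (rule bump_test[OF sub])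
    have "\<forall>t\<in>F. bump x y k t *\<^sub>R i = 0"
    proof
      fix t assume "t \<in> F"
      then have "t \<notin> {x..y}" using disj by auto
      then have "t \<le> x \<or> y \<le> t" by auto
      then show "bump x y k t *\<^sub>R i = 0" using bump_out by simp
    qed
    then have "0 = H (\<lambda>t. bump x y k t *\<^sub>R i)" using van[OF test] by simp
    also have "\<dots> = (LINT t:I|lebesgue. bump x y k t * (\<kappa> t \<bullet> i))"
      using Hdef[OF test] by simp
    also have "\<dots> = (LINT t:{x..y}|lebesgue. bump x y k t * (\<kappa> t \<bullet> i))"
      unfolding set_lebesgue_integral_def
    proof (intro arg_cong[where f="integral\<^sup>L lebesgue"] ext)
      fix t
      show "indicator I t *\<^sub>R (bump x y k t * (\<kappa> t \<bullet> i)) = indicator {x..y} t *\<^sub>R (bump x y k t * (\<kappa> t \<bullet> i))"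
      proof (cases "t \<in> {x..y}")
        case True then show ?thesis using sub by (auto simp: indicator_def)
      next
        case False then have "bump x y k t = 0" by (intro bump_out) auto
        then show ?thesis by simp
      qed
    qed
    also have "\<dots> = integral {x..y} (\<lambda>t. bump x y k t * (\<kappa> t \<bullet> i))"
      by (rule set_lebesgue_integral_eq_integral(2)[OF prod])
    finally show ?thesis by simp
  qed
  define g where "g t = (if t \<in> {x<..<y} then 1 else 0) * (\<kappa> t \<bullet> i)" for t
  have "(\<lambda>k. integral {x..y} (\<lambda>t. bump x y k t * (\<kappa> t \<bullet> i))) \<longlonglongrightarrow> integral {x..y} g"
  proof (rule dominated_convergence(2)[where h="\<lambda>t. norm (\<kappa> t \<bullet> i)"])
    show "(\<lambda>t. bump x y k t * (\<kappa> t \<bullet> i)) integrable_on {x..y}" for k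
      by (rule set_lebesgue_integral_eq_integral(1)[OF prod])
    show "(\<lambda>t. norm (\<kappa> t \<bullet> i)) integrable_on {x..y}"
      using ki[unfolded absolutely_integrable_on_def] by (rule conjunct2)
    show "norm (bump x y k t * (\<kappa> t \<bullet> i)) \<le> norm (\<kappa> t \<bullet> i)" for k t
      using bump_bounds[of x y k t] by (auto simp: abs_mult intro: mult_left_le_one_le)
    show "(\<lambda>k. bump x y k t * (\<kappa> t \<bullet> i)) \<longlonglongrightarrow> g t" for t
      unfolding g_def by (rule tendsto_mult_right[OF bump_lim])
  qed
  then have "integral {x..y} g = 0" using zero by (simp add: LIMSEQ_const_iff)
  moreover have "integral {x..y} (\<lambda>t. \<kappa> t \<bullet> i) = integral {x..y} g"
    by (rule integral_spike[of "{x, y}"]) (auto simp: g_def)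
  ultimately show ?thesis by simp
qed



lemma zero_test: "(\<lambda>t. 0) \<in> test_functions I"
  unfolding test_functions_def smooth_fun_def
  by (auto intro!: exI[of _ "\<lambda>k t. 0"])

lemma scale_test:
  assumes "f \<in> test_functions I" "c \<noteq> 0"
  shows "(\<lambda>t. c *\<^sub>R f t) \<in> test_functions I"
proof -
  from assms obtain D where D: "D 0 = f" "\<And>k t. (D k has_vector_derivative D (Suc k) t) (at t)"
    unfolding test_functions_def smooth_fun_def by blast
  have "smooth_fun (\<lambda>t. c *\<^sub>R f t)"
    unfolding smooth_fun_def
    by (rule exI[of _ "\<lambda>k t. c *\<^sub>R D k t"]) (auto simp: D(1) intro!: bounded_linear.has_vector_derivative[OF bounded_linear_scaleR_right] D(2))
  moreover have "{t. c *\<^sub>R f t \<noteq> 0} = {t. f t \<noteq> 0}" using assms(2) by auto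
  ultimately show ?thesis using assms(1) unfolding test_functions_def by auto
qed

lemma finite_vanish:
  fixes I :: "real set" and \<kappa> :: "real \<Rightarrow> 'a::euclidean_space"
    and H :: "(real \<Rightarrow> 'a) \<Rightarrow> real"
  assumes Hdef: "\<And>f. f \<in> test_functions I \<Longrightarrow> H f = (LINT t:I|lebesgue. \<kappa> t \<bullet> f t)"
    and cont: "continuous_on (test_functions I) H"
  obtains F where "finite F" "\<And>f::real\<Rightarrow>'a. f \<in> test_functions I \<Longrightarrow> (\<forall>t\<in>F. f t = 0) \<Longrightarrow> H f = 0"
proof -
  have H0: "H (\<lambda>t. 0) = 0" using Hdef[OF zero_test] by simp
  obtain A where A: "open A" "(\<lambda>t. 0) \<in> A" "\<And>y. y \<in> test_functions I \<Longrightarrow> y \<in> A \<Longrightarrow> H y \<in> {-1<..<1}"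
    using cont[unfolded continuous_on_topological, rule_format, OF zero_test, of "{-1<..<1}"] H0 by auto
  have "openin (product_topology (\<lambda>i. euclidean) UNIV) A" using A(1) by (simp add: open_fun_def)
  from product_topology_open_contains_basis[OF this A(2)]
  obtain X where X: "(\<lambda>t. 0) \<in> (\<Pi>\<^sub>E i\<in>UNIV. X i)" "finite {i. X i \<noteq> UNIV}" "(\<Pi>\<^sub>E i\<in>UNIV. X i) \<subseteq> A"
    by auto
  show ?thesis
  proof (rule that[OF X(2)])
    fix f :: "real \<Rightarrow> 'a" assume f: "f \<in> test_functions I" and z: "\<forall>t\<in>{i. X i \<noteq> UNIV}. f t = 0"
    have bound: "\<bar>c * H f\<bar> < 1" if "c \<noteq> 0" for c
    proof -
      have cf: "(\<lambda>t. c *\<^sub>R f t) \<in> test_functions I" using scale_test[OF f that] .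
      have "(\<lambda>t. c *\<^sub>R f t) \<in> (\<Pi>\<^sub>E i\<in>UNIV. X i)"
        using X(1) z by (auto simp: PiE_UNIV_domain Pi_iff) (metis UNIV_I scaleR_zero_right)
      then have "H (\<lambda>t. c *\<^sub>R f t) \<in> {-1<..<1}" using A(3)[OF cf] X(3) by auto
      moreover have "H (\<lambda>t. c *\<^sub>R f t) = c * H f"
        using Hdef[OF cf] Hdef[OF f] by simp
      ultimately show ?thesis by auto
    qed
    show "H f = 0"
    proof (rule ccontr)
      assume "H f \<noteq> 0"
      then have "\<bar>(2 / H f) * H f\<bar> < 1" by (intro bound) auto
      with \<open>H f \<noteq> 0\<close> show False by simp
    qed
  qed
qed



lemma ae_zero_interval:
  fixes k :: "real \<Rightarrow> real"
  assumes int: "set_integrable lebesgue {c..d} k"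
    and Z: "\<And>x y. c \<le> x \<Longrightarrow> x < y \<Longrightarrow> y \<le> d \<Longrightarrow> integral {x..y} k = 0"
  shows "AE t in lebesgue. t \<in> {c<..<d} \<longrightarrow> k t = 0"
proof -
  define g where "g t = (if t \<in> {c..d} then k t else 0)" for t
  have "k integrable_on {c..d}" by (rule set_lebesgue_integral_eq_integral(1)[OF int])
  then have "g integrable_on UNIV"
    unfolding g_def by (subst Henstock_Kurzweil_Integration.integrable_restrict_UNIV)
  then have gi: "g integrable_on cbox a b" for a b
    by (rule integrable_on_subcbox) auto
  obtain N where N: "negligible N"
    "\<And>x e. \<lbrakk>x \<notin> N; 0 < e\<rbrakk> \<Longrightarrow> \<exists>d>0. \<forall>h. 0 < h \<and> h < d \<longrightarrow>
        norm(integral (cbox x (x + h *\<^sub>R One)) g /\<^sub>R h ^ DIM(real) - g x) < e"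
    using integrable_ccontinuous_explicit[of g] gi by blast
  have main: "k t = 0" if t: "t \<in> {c<..<d}" "t \<notin> N" for t
  proof (rule ccontr)
    assume nz: "k t \<noteq> 0"
    obtain \<delta> where \<delta>: "\<delta> > 0" "\<And>h. 0 < h \<Longrightarrow> h < \<delta> \<Longrightarrow>
        norm(integral (cbox t (t + h *\<^sub>R One)) g /\<^sub>R h ^ DIM(real) - g t) < \<bar>k t\<bar>"
      using N(2)[OF t(2), of "\<bar>k t\<bar>"] nz by auto
    define h where "h = (if \<delta> \<le> d - t then \<delta> / 2 else (d - t) / 2)"
    have tt: "c < t" "t < d" using t by auto
    have hh: "0 < h \<and> h < \<delta> \<and> t + h < d"
    proof (cases "\<delta> \<le> d - t")
      case True
      then have he: "h = \<delta> / 2" by (simp add: h_def)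
      have "0 < h" "h < \<delta>" "t + h < d" using he True tt \<delta>(1) by argo+
      then show ?thesis by blast
    next
      case False
      then have he: "h = (d - t) / 2" by (simp add: h_def)
      have "0 < h" "h < \<delta>" "t + h < d" using he False tt \<delta>(1) by argo+
      then show ?thesis by blast
    qed
    then have h: "0 < h" "h < \<delta>" "t + h < d" by auto
    have "integral (cbox t (t + h *\<^sub>R One)) g = integral {t..t+h} k"
      by (auto simp: g_def intro!: integral_cong) (use t h in auto)
    also have "\<dots> = 0" using t h by (intro Z) auto
    finally have "norm (0 - g t) < \<bar>k t\<bar>" using \<delta>(2)[OF h(1,2)] by simp
    moreover have "g t = k t" using t by (auto simp: g_def)
    ultimately show False by simp
  qed
  have "AE t in lebesgue. t \<notin> N"
    using N(1) by (intro AE_not_in) (simp add: negligible_iff_null_sets)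
  then show ?thesis by eventually_elim (use main in auto)
qed


theorem propositionB1:
  fixes I :: "real set" and \<kappa> :: "real \<Rightarrow> 'a::euclidean_space"
    and H :: "(real \<Rightarrow> 'a) \<Rightarrow> real"
  assumes "is_interval I" and "interior I \<noteq> {}"
    and "locally_integrable_on \<kappa> I"
    and "\<And>f. f \<in> test_functions I \<Longrightarrow> H f = (LINT t:I|lebesgue. \<kappa> t \<bullet> f t)"
    and "continuous_on (test_functions I) H"
  shows "(AE t in lebesgue. t \<in> I \<longrightarrow> \<kappa> t = 0) \<and> (\<forall>f \<in> test_functions I. H f = 0)"
proof -
  note Hdef = assms(4) and loc = assms(3)
  obtain F where F: "finite F" "\<And>f::real\<Rightarrow>'a. f \<in> test_functions I \<Longrightarrow> (\<forall>t\<in>F. f t = 0) \<Longrightarrow> H f = 0"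
    using finite_vanish[OF assms(4,5)] by blast
  define V where "V = interior I - F"
  have Vopen: "open V" unfolding V_def using F(1) by (intro open_Diff) (auto intro: finite_imp_closed)
  have Z: "integral {x..y} (\<lambda>t. \<kappa> t \<bullet> i) = 0" if "{x..y} \<subseteq> V" for x y i
  proof (rule interval_zero[OF Hdef loc F(2)])
    show "{x..y} \<subseteq> I" using that interior_subset unfolding V_def by blast
    show "{x..y} \<inter> F = {}" using that unfolding V_def by blast
  qed
  have ae1: "AE t in lebesgue. c < d \<and> {c..d} \<subseteq> V \<longrightarrow> t \<in> {c<..<d} \<longrightarrow> \<kappa> t \<bullet> i = 0" for c d i
  proof (cases "c < d \<and> {c..d} \<subseteq> V")
    case True
    have "AE t in lebesgue. t \<in> {c<..<d} \<longrightarrow> \<kappa> t \<bullet> i = 0"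
    proof (rule ae_zero_interval)
      show "set_integrable lebesgue {c..d} (\<lambda>t. \<kappa> t \<bullet> i)"
        using loc True interior_subset unfolding locally_integrable_on_def V_def
        by (intro set_integrable_inner) blast
      show "integral {x..y} (\<lambda>t. \<kappa> t \<bullet> i) = 0" if "c \<le> x" "x < y" "y \<le> d" for x y
        using that True by (intro Z) auto
    qed
    then show ?thesis by auto
  qed auto
  have "AE t in lebesgue. \<forall>c\<in>\<rat>. \<forall>d\<in>\<rat>. \<forall>i\<in>Basis. c < d \<and> {c..d} \<subseteq> V \<longrightarrow> t \<in> {c<..<d} \<longrightarrow> \<kappa> t \<bullet> i = 0"
    unfolding AE_ball_countable[OF countable_rat] AE_ball_countable[OF countable_finite[OF finite_Basis]]
    using ae1 by blast
  moreover have "AE t in lebesgue. t \<notin> frontier I \<union> F"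
  proof (rule AE_not_in)
    have "negligible (frontier I)"
      by (rule negligible_convex_frontier) (use assms(1) is_interval_convex in auto)
    moreover have "negligible F" using F(1) by (rule negligible_finite)
    ultimately show "frontier I \<union> F \<in> null_sets lebesgue"
      by (simp add: negligible_iff_null_sets[symmetric])
  qed
  ultimately have ae: "AE t in lebesgue. t \<in> I \<longrightarrow> \<kappa> t = 0"
  proof eventually_elim
    case (elim t)
    show ?case
    proof
      assume tI: "t \<in> I"
      have "t \<in> interior I" using tI elim(2) closure_subset unfolding frontier_def by blast
      then have "t \<in> V" using elim(2) unfolding V_def by blast
      then obtain e where e: "e > 0" "ball t e \<subseteq> V" using Vopen open_contains_ball by blast
      obtain c where c: "c \<in> \<rat>" "t - e < c" "c < t" using Rats_dense_in_real[of "t - e" t] e(1) by auto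
      obtain d where d: "d \<in> \<rat>" "t < d" "d < t + e" using Rats_dense_in_real[of t "t + e"] e(1) by auto
      have "{c..d} \<subseteq> ball t e" using c d by (auto simp: dist_real_def)
      then have "{c..d} \<subseteq> V" using e(2) by blast
      then have "\<forall>i\<in>Basis. \<kappa> t \<bullet> i = 0" using elim(1) c d by auto
      then show "\<kappa> t = 0" by (simp add: euclidean_all_zero_iff)
    qed
  qed
  have "H f = 0" if f: "f \<in> test_functions I" for f
  proof -
    have "H f = (LINT t:I|lebesgue. \<kappa> t \<bullet> f t)" by (rule Hdef[OF f])
    also have "\<dots> = 0"
      unfolding set_lebesgue_integral_def
      by (rule integral_eq_zero_AE) (use ae in \<open>eventually_elim, auto simp: indicator_def\<close>)
    finally show ?thesis .
  qed
  with ae show ?thesis by blast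
qed

end
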